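(* Let $G=(V,E)$ be a control flow graph and $p,a,b\in V$ three distinct nodes such that $p$ is a predicate node with successors $s_1$ and $s_2$. Then $a,b$ are DOD on $p$ if and only if (i) $p$ has at least two successors in $A_p$, (ii) there exists an $s_1$-strip in $A_p$ that contains $a$ before $b$, and (iii) there exists an $s_2$-strip in $A_p$ that contains $b$ before $a$.
   Context: A control flow graph (CFG) is a finite directed graph $G=(V,E)$ in which every node has at most two outgoing edges; nodes with exactly two outgoing edges are predicate nodes. A path from $n_1$ is a nonempty finite or infinite sequence of nodes with each adjacent pair an edge; it is maximal if it is infinite or its last node has no successor. $V_p$ is the set of nodes occurring on all maximal paths from $p$ in $G$. For $V'\subseteq V$, a $V'$-interval from $x$ to $y$ is a finite path $n_1\ldots n_k$ in $G$ with $k\ge 2$, $n_1=x\in V'$, $n_k=y\in V'$, and $n_i\notin V'$ for $1<i<k$. $A_p$ is the directed graph with node set $V_p$ and an edge $(x,y)$ iff there is a $V_p$-interval from $x$ to $y$ in $G$. For $i\in\{1,2\}$, $V_i$ is the set of nodes $n\in V_p$ such that there is a finite path in $G$ from $s_i$ to $n$ whose nodes other than the last one all lie outside $V_p$ (possibly $n=s_i$). An $s_i$-strip is a finite path $n\ldots m$ in $A_p$ whose first node lies in $V_i$ and all of whose other nodes lie in $V_p\setminus V_i$, such that the successor of $m$ in $A_p$ is a node in $V_i$. For three distinct nodes $p,a,b$ with $p$ a predicate node with successors $s_1,s_2$, the nodes $a,b$ are DOD on $p$ if all maximal paths from $p$ contain both $a$ and $b$, all maximal paths from $s_1$ contain $a$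 before any occurrence of $b$, and all maximal paths from $s_2$ contain $b$ before any occurrence of $a$. *)

theory Defs
  imports Main
begin

definition cfg :: "'v set \<Rightarrow> ('v \<times> 'v) set \<Rightarrow> bool" where
  "cfg V E \<longleftrightarrow> finite V \<and> E \<subseteq> V \<times> V \<and> (\<forall>n. card {m. (n, m) \<in> E} \<le> 2)"

definition succs :: "('v \<times> 'v) set \<Rightarrow> 'v \<Rightarrow> 'v set" where
  "succs E n = {m. (n, m) \<in> E}"

definition fpath :: "('v \<times> 'v) set \<Rightarrow> 'v list \<Rightarrow> bool" where
  "fpath E xs \<longleftrightarrow> xs \<noteq> [] \<and> (\<forall>i. Suc i < length xs \<longrightarrow> (xs ! i, xs ! Suc i) \<in> E)"

definition ipath :: "('v \<times> 'v) set \<Rightarrow> (nat \<Rightarrow> 'v) \<Rightarrow> bool" where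
  "ipath E f \<longleftrightarrow> (\<forall>i. (f i, f (Suc i)) \<in> E)"

text \<open>Maximal finite paths from n: the last node has no successor.
  (Infinite paths are always maximal.)\<close>

definition max_fpath_from :: "('v \<times> 'v) set \<Rightarrow> 'v \<Rightarrow> 'v list \<Rightarrow> bool" where
  "max_fpath_from E n xs \<longleftrightarrow> fpath E xs \<and> hd xs = n \<and> succs E (last xs) = {}"

definition ipath_from :: "('v \<times> 'v) set \<Rightarrow> 'v \<Rightarrow> (nat \<Rightarrow> 'v) \<Rightarrow> bool" where
  "ipath_from E n f \<longleftrightarrow> ipath E f \<and> f 0 = n"

definition on_all_max_paths :: "('v \<times> 'v) set \<Rightarrow> 'v \<Rightarrow> 'v \<Rightarrow> bool" where
  "on_all_max_paths E n a \<longleftrightarrow>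
     (\<forall>xs. max_fpath_from E n xs \<longrightarrow> a \<in> set xs) \<and>
     (\<forall>f. ipath_from E n f \<longrightarrow> (\<exists>i. f i = a))"

definition before_on_all_max_paths :: "('v \<times> 'v) set \<Rightarrow> 'v \<Rightarrow> 'v \<Rightarrow> 'v \<Rightarrow> bool" where
  "before_on_all_max_paths E n a b \<longleftrightarrow>
     (\<forall>xs. max_fpath_from E n xs \<longrightarrow>
        (\<exists>i < length xs. xs ! i = a \<and> (\<forall>j < i. xs ! j \<noteq> b))) \<and>
     (\<forall>f. ipath_from E n f \<longrightarrow> (\<exists>i. f i = a \<and> (\<forall>j < i. f j \<noteq> b)))"

definition Vp :: "'v set \<Rightarrow> ('v \<times> 'v) set \<Rightarrow> 'v \<Rightarrow> 'v set" where
  "Vp V E p = {n \<in> V. on_all_max_paths E p n}"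

definition interval :: "('v \<times> 'v) set \<Rightarrow> 'v set \<Rightarrow> 'v \<Rightarrow> 'v \<Rightarrow> 'v list \<Rightarrow> bool" where
  "interval E V' x y xs \<longleftrightarrow> fpath E xs \<and> length xs \<ge> 2 \<and>
     hd xs = x \<and> x \<in> V' \<and> last xs = y \<and> y \<in> V' \<and>
     (\<forall>i. 0 < i \<and> i < length xs - 1 \<longrightarrow> xs ! i \<notin> V')"

text \<open>Edge relation of the graph A_p (node set V_p).\<close>

definition Ap :: "'v set \<Rightarrow> ('v \<times> 'v) set \<Rightarrow> 'v \<Rightarrow> ('v \<times> 'v) set" where
  "Ap V E p = {(x, y). \<exists>xs. interval E (Vp V E p) x y xs}"

definition Vs :: "'v set \<Rightarrow> ('v \<times> 'v) set \<Rightarrow> 'v \<Rightarrow> 'v \<Rightarrow> 'v set" where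
  "Vs V E p s = {n \<in> Vp V E p. \<exists>xs. fpath E xs \<and> hd xs = s \<and> last xs = n \<and>
       (\<forall>k. k < length xs - 1 \<longrightarrow> xs ! k \<notin> Vp V E p)}"

definition strip :: "'v set \<Rightarrow> ('v \<times> 'v) set \<Rightarrow> 'v \<Rightarrow> 'v \<Rightarrow> 'v list \<Rightarrow> bool" where
  "strip V E p s ns \<longleftrightarrow> fpath (Ap V E p) ns \<and> hd ns \<in> Vs V E p s \<and>
     (\<forall>k. 0 < k \<and> k < length ns \<longrightarrow> ns ! k \<in> Vp V E p - Vs V E p s) \<and>
     (\<exists>y. (last ns, y) \<in> Ap V E p \<and> y \<in> Vs V E p s)"

definition contains_before :: "'v list \<Rightarrow> 'v \<Rightarrow> 'v \<Rightarrow> bool" where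
  "contains_before ns a b \<longleftrightarrow> (\<exists>i j. i < j \<and> j < length ns \<and> ns ! i = a \<and> ns ! j = b)"

text \<open>DOD: a, b are dually ordering dependent on p (successors s1, s2).\<close>

definition DOD :: "('v \<times> 'v) set \<Rightarrow> 'v \<Rightarrow> 'v \<Rightarrow> 'v \<Rightarrow> 'v \<Rightarrow> 'v \<Rightarrow> bool" where
  "DOD E p s1 s2 a b \<longleftrightarrow>
     on_all_max_paths E p a \<and> on_all_max_paths E p b \<and>
     before_on_all_max_paths E s1 a b \<and> before_on_all_max_paths E s2 b a"

end

theory Submission imports Defs begin

fun gp :: "('v \<times> 'v) set \<Rightarrow> 'v list \<Rightarrow> bool" where
  "gp E [] = False"
| "gp E [x] = True"
| "gp E (x # y # xs) = ((x, y) \<in> E \<and> gp E (y # xs))"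

lemma fpath_gp: "fpath E xs = gp E xs"
proof (induction E xs rule: gp.induct)
  case (3 E x y xs)
  have "(\<forall>i. Suc i < length (x # y # xs) \<longrightarrow> ((x # y # xs) ! i, (x # y # xs) ! Suc i) \<in> E)
     \<longleftrightarrow> (x, y) \<in> E \<and> (\<forall>i. Suc i < length (y # xs) \<longrightarrow> ((y # xs) ! i, (y # xs) ! Suc i) \<in> E)"
    (is "?L = ?R")
  proof
    assume L: ?L
    have "(x, y) \<in> E" using L[rule_format, of 0] by simp
    moreover have "\<forall>i. Suc i < length (y # xs) \<longrightarrow> ((y # xs) ! i, (y # xs) ! Suc i) \<in> E"
    proof (intro allI impI)
      fix i assume "Suc i < length (y # xs)"
      then have "Suc (Suc i) < length (x # y # xs)" by simp
      from L[rule_format, OF this] show "((y # xs) ! i, (y # xs) ! Suc i) \<in> E" by simp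
    qed
    ultimately show ?R by blast
  next
    assume ?R
    show ?L
    proof (intro allI impI)
      fix i assume "Suc i < length (x # y # xs)"
      then show "((x # y # xs) ! i, (x # y # xs) ! Suc i) \<in> E"
        using \<open>?R\<close> by (cases i) auto
    qed
  qed
  then show ?case using 3 by (simp add: fpath_def)
qed (auto simp: fpath_def)

lemma gp_Cons: "gp E (x # xs) \<longleftrightarrow> xs = [] \<or> ((x, hd xs) \<in> E \<and> gp E xs)"
  by (cases xs) auto

lemma gp_ne: "gp E xs \<Longrightarrow> xs \<noteq> []" by auto

lemma gp_append: "gp E (xs @ ys) \<longleftrightarrow>
   (xs = [] \<and> gp E ys) \<or> (ys = [] \<and> gp E xs) \<or> (gp E xs \<and> gp E ys \<and> (last xs, hd ys) \<in> E)"
  by (induction xs) (auto simp: gp_Cons)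

lemma gp_join: "gp E xs \<Longrightarrow> gp E ys \<Longrightarrow> last xs = hd ys \<Longrightarrow> gp E (xs @ tl ys)"
proof (cases ys)
  case (Cons y ys')
  assume "gp E xs" "gp E ys" "last xs = hd ys"
  then show ?thesis using Cons by (cases ys') (auto simp: gp_append gp_Cons)
qed simp

lemma join_hd: "xs \<noteq> [] \<Longrightarrow> hd (xs @ tl ys) = hd xs" by simp
lemma join_last: "gp E ys \<Longrightarrow> last xs = hd ys \<Longrightarrow> xs \<noteq> [] \<Longrightarrow> last (xs @ tl ys) = last ys"
  by (cases ys) auto
lemma join_set: "set (xs @ tl ys) \<subseteq> set xs \<union> set ys"
  by (cases ys) auto

lemma gp_take: "gp E xs \<Longrightarrow> 0 < n \<Longrightarrow> gp E (take n xs)"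
proof (induction n arbitrary: xs)
  case 0 thus ?case by simp
next
  case (Suc n)
  obtain x xs' where xs: "xs = x # xs'" using Suc by (cases xs) auto
  show ?case
  proof (cases "n = 0 \<or> xs' = []")
    case True thus ?thesis using xs by auto
  next
    case False
    then have "gp E xs'" "(x, hd xs') \<in> E" using Suc.prems xs by (auto simp: gp_Cons)
    then have "gp E (take n xs')" using Suc.IH False by auto
    moreover have "hd (take n xs') = hd xs'" using False by (cases xs') auto
    ultimately show ?thesis using xs False \<open>(x, hd xs') \<in> E\<close> by (auto simp: gp_Cons)
  qed
qed

lemma gp_drop: "gp E xs \<Longrightarrow> n < length xs \<Longrightarrow> gp E (drop n xs)"
proof (induction n arbitrary: xs)
  case (Suc n)
  then obtain x xs' where "xs = x # xs'" by (cases xs) auto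
  with Suc show ?case by (auto simp: gp_Cons)
qed simp

lemma gp_butlast: "gp E xs \<Longrightarrow> length xs \<ge> 2 \<Longrightarrow> gp E (butlast xs)"
  using gp_take[of E xs "length xs - 1"] by (simp add: butlast_conv_take)

lemma gp_edge: "gp E xs \<Longrightarrow> Suc i < length xs \<Longrightarrow> (xs ! i, xs ! Suc i) \<in> E"
  using fpath_gp[of E] by (auto simp: fpath_def)

lemma gp_last_edge: "gp E xs \<Longrightarrow> length xs \<ge> 2 \<Longrightarrow> (last (butlast xs), last xs) \<in> E"
proof -
  assume a: "gp E xs" "length xs \<ge> 2"
  then have "(xs ! (length xs - 2), xs ! Suc (length xs - 2)) \<in> E" by (intro gp_edge) auto
  moreover have "Suc (length xs - 2) = length xs - 1" using a by simp
  moreover have ne: "xs \<noteq> []" using a by auto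
  moreover have "last xs = xs ! (length xs - 1)" using ne by (simp add: last_conv_nth)
  moreover have "last (butlast xs) = xs ! (length xs - 2)"
  proof -
    have bne: "butlast xs \<noteq> []" using a by (cases xs) auto
    have "last (butlast xs) = butlast xs ! (length (butlast xs) - 1)" using bne by (simp add: last_conv_nth)
    also have "\<dots> = butlast xs ! (length xs - 2)" by (simp add: numeral_2_eq_2)
    also have "\<dots> = xs ! (length xs - 2)" using a by (intro nth_butlast) simp
    finally show ?thesis .
  qed
  ultimately show ?thesis by simp
qed

lemma butlast_nth_iff: "(\<forall>k. k < length xs - 1 \<longrightarrow> xs ! k \<notin> S) \<longleftrightarrow> set (butlast xs) \<inter> S = {}"
proof
  assume H: "\<forall>k. k < length xs - 1 \<longrightarrow> xs ! k \<notin> S"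
  show "set (butlast xs) \<inter> S = {}"
  proof (rule ccontr)
    assume "set (butlast xs) \<inter> S \<noteq> {}"
    then obtain x where x: "x \<in> set (butlast xs)" "x \<in> S" by auto
    then obtain k where k: "k < length (butlast xs)" "butlast xs ! k = x" by (auto simp: in_set_conv_nth)
    then have "xs ! k = x" by (simp add: nth_butlast)
    then show False using H k x by auto
  qed
next
  assume H: "set (butlast xs) \<inter> S = {}"
  show "\<forall>k. k < length xs - 1 \<longrightarrow> xs ! k \<notin> S"
  proof (intro allI impI)
    fix k assume "k < length xs - 1"
    then have e: "xs ! k = butlast xs ! k" and kl: "k < length (butlast xs)" by (simp_all add: nth_butlast)
    from kl have "butlast xs ! k \<in> set (butlast xs)" by (rule nth_mem)
    then show "xs ! k \<notin> S" using H e by auto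
  qed
qed

coinductive esc :: "('v \<times> 'v) set \<Rightarrow> 'v set \<Rightarrow> 'v \<Rightarrow> bool" for E A where
  sink: "n \<notin> A \<Longrightarrow> succs E n = {} \<Longrightarrow> esc E A n"
| step: "n \<notin> A \<Longrightarrow> (n, m) \<in> E \<Longrightarrow> esc E A m \<Longrightarrow> esc E A n"

lemma esc_notin: "esc E A n \<Longrightarrow> n \<notin> A"
  by (erule esc.cases) auto

lemma esc_mono: "esc E B n \<Longrightarrow> A \<subseteq> B \<Longrightarrow> esc E A n"
proof (coinduction arbitrary: n rule: esc.coinduct)
  case (esc n)
  from esc(1) show ?case
  proof cases
    case sink then show ?thesis using esc(2) by auto
  next
    case (step m) then show ?thesis using esc(2) by auto
  qed
qed

lemma esc_empty: "esc E {} n"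
proof (coinduction arbitrary: n rule: esc.coinduct)
  case (esc n)
  show ?case
  proof (cases "succs E n = {}")
    case False then obtain m where "(n, m) \<in> E" by (auto simp: succs_def)
    then show ?thesis by auto
  qed auto
qed

lemma esc_path: "gp E xs \<Longrightarrow> set xs \<inter> A = {} \<Longrightarrow> esc E A (last xs) \<Longrightarrow> esc E A (hd xs)"
proof (induction xs rule: gp.induct)
  case (3 E x y xs)
  then have "esc E A y" by auto
  then show ?case using 3 by (auto intro: esc.step)
qed auto

lemma esc_cycle_aux:
  assumes "gp E xs" "length xs \<ge> 2" "hd xs = last xs" "set xs \<inter> A = {}"
  shows "n \<in> set xs \<Longrightarrow> esc E A n"
proof (coinduction arbitrary: n rule: esc.coinduct)
  case (esc n)
  then obtain i where i: "i < length xs" "n = xs ! i" by (auto simp: in_set_conv_nth)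
  have nA: "n \<notin> A" using esc assms(4) by auto
  show ?case
  proof (cases "Suc i < length xs")
    case True
    then have "(n, xs ! Suc i) \<in> E" using gp_edge[OF assms(1)] i by auto
    then show ?thesis using nA True by auto
  next
    case False
    then have "i = length xs - 1" using i by simp
    moreover have "xs \<noteq> []" using i by auto
    ultimately have "n = last xs" using i by (simp add: last_conv_nth)
    moreover have "xs \<noteq> []" using assms(2) by auto
    ultimately have "n = xs ! 0" using assms(3) by (simp add: hd_conv_nth)
    moreover have "(xs ! 0, xs ! Suc 0) \<in> E" using gp_edge[OF assms(1), of 0] assms(2) by auto
    moreover have "xs ! Suc 0 \<in> set xs" using assms(2) by (intro nth_mem) simp
    ultimately show ?thesis using nA by blast
  qed
qed

lemma esc_cycle:
  assumes "gp E xs" "length xs \<ge> 2" "hd xs = last xs" "set xs \<inter> A = {}"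
  shows "esc E A (hd xs)"
  using esc_cycle_aux[OF assms] assms(1) by (cases xs) auto

lemma notesc_path:
  assumes "\<not> esc E A n"
  shows "\<exists>xs. gp E xs \<and> hd xs = n \<and> last xs \<in> A \<and> set (butlast xs) \<inter> A = {}"
proof (rule ccontr)
  assume H: "\<not> ?thesis"
  have "esc E A n" using H
  proof (coinduction arbitrary: n rule: esc.coinduct)
    case (esc n)
    have nA: "n \<notin> A"
    proof
      assume "n \<in> A"
      then have "gp E [n] \<and> hd [n] = n \<and> last [n] \<in> A \<and> set (butlast [n]) \<inter> A = {}" by simp
      then show False using esc by blast
    qed
    show ?case
    proof (cases "succs E n = {}")
      case True then show ?thesis using nA by auto
    next
      case False
      then obtain m where m: "(n, m) \<in> E" by (auto simp: succs_def)
      have "\<not> (\<exists>xs. gp E xs \<and> hd xs = m \<and> last xs \<in> A \<and> set (butlast xs) \<inter> A = {})"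
      proof
        assume "\<exists>xs. gp E xs \<and> hd xs = m \<and> last xs \<in> A \<and> set (butlast xs) \<inter> A = {}"
        then obtain xs where xs: "gp E xs" "hd xs = m" "last xs \<in> A" "set (butlast xs) \<inter> A = {}" by blast
        have "gp E (n # xs)" using xs m by (simp add: gp_Cons)
        moreover have "last (n # xs) \<in> A" using xs by auto
        moreover have "set (butlast (n # xs)) \<inter> A = {}" using xs nA by auto
        ultimately show False using esc by (metis list.sel(1))
      qed
      then show ?thesis using nA m by auto
    qed
  qed
  then show False using assms by simp
qed

lemma esc_split:
  assumes "esc E A x" "\<forall>z\<in>B. \<not> esc E A z"
  shows "esc E (A \<union> B) x"
  using assms(1)
proof (coinduction arbitrary: x rule: esc.coinduct)
  case (esc x)
  have "x \<notin> B" using esc assms(2) by auto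
  from esc show ?case
  proof cases
    case sink then show ?thesis using \<open>x \<notin> B\<close> by auto
  next
    case (step m) then show ?thesis using \<open>x \<notin> B\<close> by auto
  qed
qed


lemma maxf_esc:
  assumes "gp E xs" "succs E (last xs) = {}" "set xs \<inter> A = {}"
  shows "esc E A (hd xs)"
proof -
  have "last xs \<notin> A" using assms by (metis disjoint_iff gp_ne last_in_set)
  then have "esc E A (last xs)" using assms(2) by (rule esc.sink)
  then show ?thesis using esc_path assms by metis
qed

lemma ipath_esc_aux:
  assumes "ipath E f" "\<forall>i. f i \<notin> A"
  shows "\<exists>i. n = f i \<Longrightarrow> esc E A n"
proof (coinduction arbitrary: n rule: esc.coinduct)
  case (esc n)
  then obtain i where ni: "n = f i" by blast
  have "n \<notin> A" "(n, f (Suc i)) \<in> E" using assms ni by (auto simp: ipath_def)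
  then show ?case by blast
qed

lemma ipath_esc:
  assumes "ipath E f" "\<forall>i. f i \<notin> A" shows "esc E A (f 0)"
  by (rule ipath_esc_aux[OF assms]) blast

lemma esc_maxpath:
  assumes "esc E A n"
  shows "(\<exists>xs. gp E xs \<and> hd xs = n \<and> succs E (last xs) = {} \<and> set xs \<inter> A = {}) \<or>
         (\<exists>f. ipath E f \<and> f 0 = n \<and> (\<forall>i. f i \<notin> A))"
proof -
  define P where "P x \<longleftrightarrow> (\<exists>m. (x, m) \<in> E \<and> esc E A m)" for x
  define nx where "nx x = (if P x then (SOME m. (x, m) \<in> E \<and> esc E A m) else x)" for x
  define f where "f i = (nx ^^ i) n" for i
  have f0: "f 0 = n" by (simp add: f_def)
  have fS: "f (Suc i) = nx (f i)" for i by (simp add: f_def)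
  have nxP: "P x \<Longrightarrow> (x, nx x) \<in> E \<and> esc E A (nx x)" for x
    using someI_ex[of "\<lambda>m. (x, m) \<in> E \<and> esc E A m"] unfolding nx_def P_def by auto
  have inv: "esc E A (f i)" for i
  proof (induction i)
    case 0 then show ?case using assms f0 by simp
  next
    case (Suc i) then show ?case using nxP[of "f i"] fS by (cases "P (f i)") (auto simp: nx_def)
  qed
  show ?thesis
  proof (cases "\<forall>i. P (f i)")
    case True
    then have "ipath E f" using nxP fS by (auto simp: ipath_def)
    moreover have "\<forall>i. f i \<notin> A" using inv esc_notin by metis
    ultimately show ?thesis using f0 by blast
  next
    case False
    define i0 where "i0 = (LEAST i. \<not> P (f i))"
    have ni0: "\<not> P (f i0)" unfolding i0_def using False by (metis (mono_tags, lifting) LeastI)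
    have lt: "k < i0 \<Longrightarrow> P (f k)" for k unfolding i0_def using not_less_Least by blast
    have "succs E (f i0) = {}"
      using inv[of i0] ni0 by (cases rule: esc.cases) (auto simp: P_def)
    define xs where "xs = map f [0..<Suc i0]"
    have "gp E xs"
      unfolding fpath_gp[symmetric] fpath_def xs_def
      using lt nxP fS by (auto simp del: upt_Suc)
    moreover have "hd xs = n" using f0 by (simp add: xs_def hd_map del: upt_Suc)
    moreover have "last xs = f i0" by (simp add: xs_def last_map del: upt_Suc)
    moreover have "set xs \<inter> A = {}"
    proof -
      have "\<forall>i. f i \<notin> A" using inv esc_notin by metis
      then show ?thesis by (auto simp: xs_def)
    qed
    ultimately show ?thesis using \<open>succs E (f i0) = {}\<close> by metis
  qed
qed

lemma onall_esc: "on_all_max_paths E n a \<longleftrightarrow> \<not> esc E {a} n"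
proof
  assume H: "on_all_max_paths E n a"
  show "\<not> esc E {a} n"
  proof
    assume "esc E {a} n"
    from esc_maxpath[OF this] show False
    proof
      assume "\<exists>xs. gp E xs \<and> hd xs = n \<and> succs E (last xs) = {} \<and> set xs \<inter> {a} = {}"
      then obtain xs where "gp E xs" "hd xs = n" "succs E (last xs) = {}" "set xs \<inter> {a} = {}" by blast
      then show False using H by (auto simp: on_all_max_paths_def max_fpath_from_def fpath_gp)
    next
      assume "\<exists>f. ipath E f \<and> f 0 = n \<and> (\<forall>i. f i \<notin> {a})"
      then show False using H by (auto simp: on_all_max_paths_def ipath_from_def)
    qed
  qed
next
  assume H: "\<not> esc E {a} n"
  show "on_all_max_paths E n a"
    unfolding on_all_max_paths_def
  proof (intro conjI allI impI)
    fix xs assume "max_fpath_from E n xs"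
    then show "a \<in> set xs" using H maxf_esc[of E xs "{a}"]
      by (auto simp: max_fpath_from_def fpath_gp)
  next
    fix f assume "ipath_from E n f"
    then show "\<exists>i. f i = a" using H ipath_esc[of E f "{a}"]
      by (auto simp: ipath_from_def)
  qed
qed


definition rav :: "('v \<times> 'v) set \<Rightarrow> 'v \<Rightarrow> 'v \<Rightarrow> 'v \<Rightarrow> bool" where
  "rav E n a b \<longleftrightarrow> (\<exists>g. gp E g \<and> hd g = n \<and> last g = b \<and> a \<notin> set g)"

lemma before_esc: "before_on_all_max_paths E n a b \<longleftrightarrow> \<not> esc E {a} n \<and> \<not> rav E n a b"
proof
  assume H: "before_on_all_max_paths E n a b"
  have H1: "\<exists>i<length xs. xs ! i = a \<and> (\<forall>j<i. xs ! j \<noteq> b)" if "gp E xs" "hd xs = n" "succs E (last xs) = {}" for xs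
    using H that by (auto simp: before_on_all_max_paths_def max_fpath_from_def fpath_gp)
  have H2: "\<exists>i. f i = a \<and> (\<forall>j<i. f j \<noteq> b)" if "ipath E f" "f 0 = n" for f
    using H that by (auto simp: before_on_all_max_paths_def ipath_from_def)
  show "\<not> esc E {a} n \<and> \<not> rav E n a b"
  proof (intro conjI notI)
    assume "esc E {a} n"
    from esc_maxpath[OF this] show False
    proof
      assume "\<exists>xs. gp E xs \<and> hd xs = n \<and> succs E (last xs) = {} \<and> set xs \<inter> {a} = {}"
      then obtain xs where "gp E xs" "hd xs = n" "succs E (last xs) = {}" "set xs \<inter> {a} = {}" by blast
      then show False using H1 nth_mem by fastforce
    next
      assume "\<exists>f. ipath E f \<and> f 0 = n \<and> (\<forall>i. f i \<notin> {a})"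
      then show False using H2 by blast
    qed
  next
    assume "rav E n a b"
    then obtain g where g: "gp E g" "hd g = n" "last g = b" "a \<notin> set g" by (auto simp: rav_def)
    have gne: "g \<noteq> []" using g by auto
    have lg: "g ! (length g - 1) = b" using g gne by (simp add: last_conv_nth)
    from esc_maxpath[OF esc_empty[of E b]] show False
    proof
      assume "\<exists>xs. gp E xs \<and> hd xs = b \<and> succs E (last xs) = {} \<and> set xs \<inter> {} = {}"
      then obtain ys where ys: "gp E ys" "hd ys = b" "succs E (last ys) = {}" by blast
      define xs where "xs = g @ tl ys"
      have "gp E xs" unfolding xs_def using g ys gp_join by metis
      moreover have "hd xs = n" using g gne by (simp add: xs_def)
      moreover have "last xs = last ys" unfolding xs_def using join_last g ys gne by metis
      ultimately obtain i where i: "i < length xs" "xs ! i = a" "\<forall>j<i. xs ! j \<noteq> b"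
        using H1 ys by metis
      have "\<not> i < length g"
      proof
        assume "i < length g" then have "xs ! i = g ! i" by (simp add: xs_def nth_append)
        then show False using i g \<open>i < length g\<close> nth_mem by metis
      qed
      then have "length g - 1 < i" using gne by (cases g) auto
      moreover have "xs ! (length g - 1) = b" using lg gne by (simp add: xs_def nth_append)
      ultimately show False using i by blast
    next
      assume "\<exists>f. ipath E f \<and> f 0 = b \<and> (\<forall>i. f i \<notin> {})"
      then obtain f where f: "ipath E f" "f 0 = b" by blast
      define h where "h k = (if k < length g then g ! k else f (k + 1 - length g))" for k
      have "ipath E h" unfolding ipath_def
      proof
        fix k
        show "(h k, h (Suc k)) \<in> E"
        proof (cases "Suc k < length g")
          case True then show ?thesis using gp_edge[OF g(1) True] by (simp add: h_def)
        next
          case False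
          show ?thesis
          proof (cases "k < length g")
            case True
            then have "k = length g - 1" using False by simp
            then have k1: "Suc k = length g" using True by simp
            have "h k = f 0" using True lg f(2) \<open>k = length g - 1\<close> by (simp add: h_def)
            moreover have "h (Suc k) = f 1" using k1 by (simp add: h_def)
            ultimately have "h k = f 0" "h (Suc k) = f 1" by auto
            then show ?thesis using f(1) by (simp add: ipath_def)
          next
            case False
            then have "h k = f (k + 1 - length g)" "h (Suc k) = f (Suc (k + 1 - length g))"
              by (auto simp: h_def Suc_diff_le)
            then show ?thesis using f(1) by (simp add: ipath_def)
          qed
        qed
      qed
      moreover have "h 0 = n" using g gne by (simp add: h_def hd_conv_nth)
      ultimately obtain i where i: "h i = a" "\<forall>j<i. h j \<noteq> b" using H2 by metis
      have "\<not> i < length g"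
      proof
        assume "i < length g" then have "h i = g ! i" by (simp add: h_def)
        then show False using i g \<open>i < length g\<close> nth_mem by metis
      qed
      then have "length g - 1 < i" using gne by (cases g) auto
      moreover have "h (length g - 1) = b" using lg gne by (simp add: h_def)
      ultimately show False using i by blast
    qed
  qed
next
  assume H: "\<not> esc E {a} n \<and> \<not> rav E n a b"
  show "before_on_all_max_paths E n a b"
    unfolding before_on_all_max_paths_def
  proof (intro conjI allI impI)
    fix xs assume "max_fpath_from E n xs"
    then have xs: "gp E xs" "hd xs = n" "succs E (last xs) = {}"
      by (auto simp: max_fpath_from_def fpath_gp)
    have "a \<in> set xs" using H maxf_esc[of E xs "{a}"] xs by auto
    then have ex: "\<exists>i. i < length xs \<and> xs ! i = a" by (auto simp: in_set_conv_nth)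
    define i where "i = (LEAST i. i < length xs \<and> xs ! i = a)"
    have i: "i < length xs" "xs ! i = a" unfolding i_def using LeastI_ex[OF ex] by auto
    have min: "k < i \<Longrightarrow> xs ! k \<noteq> a" for k
      unfolding i_def using not_less_Least i(1) i_def by fastforce
    show "\<exists>i<length xs. xs ! i = a \<and> (\<forall>j<i. xs ! j \<noteq> b)"
    proof (intro exI conjI allI impI)
      fix j assume j: "j < i"
      show "xs ! j \<noteq> b"
      proof
        assume xj: "xs ! j = b"
        define g where "g = take (Suc j) xs"
        have "gp E g" unfolding g_def using gp_take xs by auto
        moreover have "hd g = n" using xs i j by (simp add: g_def)
        moreover have "last g = b" using xj i j by (simp add: g_def take_Suc_conv_app_nth)
        moreover have "a \<notin> set g"
        proof
          assume "a \<in> set g"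
          then obtain k where "k < length g" "g ! k = a" by (auto simp: in_set_conv_nth)
          then have "k \<le> j" "xs ! k = a" by (auto simp: g_def)
          then show False using min j by auto
        qed
        ultimately show False using H by (auto simp: rav_def)
      qed
    qed (use i in auto)
  next
    fix f assume "ipath_from E n f"
    then have f: "ipath E f" "f 0 = n" by (auto simp: ipath_from_def)
    have ex: "\<exists>i. f i = a" using H ipath_esc[of E f "{a}"] f by auto
    define i where "i = (LEAST i. f i = a)"
    have i: "f i = a" unfolding i_def using LeastI_ex[OF ex] by auto
    have min: "k < i \<Longrightarrow> f k \<noteq> a" for k unfolding i_def using not_less_Least by blast
    show "\<exists>i. f i = a \<and> (\<forall>j<i. f j \<noteq> b)"
    proof (intro exI conjI allI impI)
      fix j assume j: "j < i"
      show "f j \<noteq> b"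
      proof
        assume fj: "f j = b"
        define g where "g = map f [0..<Suc j]"
        have "gp E g" unfolding g_def fpath_gp[symmetric] fpath_def using f
          by (auto simp: ipath_def simp del: upt_Suc)
        moreover have "hd g = n" using f by (simp add: g_def hd_map del: upt_Suc)
        moreover have "last g = b" using fj by (simp add: g_def last_map del: upt_Suc)
        moreover have "a \<notin> set g"
        proof
          assume "a \<in> set g"
          then obtain k where k: "k < Suc j" "f k = a" by (auto simp: g_def simp del: upt_Suc)
          then have "k < i" using j by simp
          then show False using min k by blast
        qed
        ultimately show False using H by (auto simp: rav_def)
      qed
    qed (rule i)
  qed
qed


lemma set_bl: "xs \<noteq> [] \<Longrightarrow> set xs = insert (last xs) (set (butlast xs))"
  by (metis append_butlast_last_id insert_is_Un list.set(2) set_append set_empty Un_commute)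

lemma suffix_from:
  assumes "gp E xs" "d \<in> set xs"
  shows "\<exists>ys. gp E ys \<and> hd ys = d \<and> last ys = last xs \<and> set ys \<subseteq> set xs"
proof -
  obtain l r where xs: "xs = l @ d # r" using assms(2) by (meson split_list)
  have "gp E (d # r)" using assms(1) xs by (auto simp: gp_append)
  moreover have "last (d # r) = last xs" using xs by simp
  ultimately show ?thesis using xs by (intro exI[of _ "d # r"]) auto
qed

lemma Vp_iff: "n \<in> Vp V E p \<longleftrightarrow> n \<in> V \<and> \<not> esc E {n} p"
  by (simp add: Vp_def onall_esc)

lemma interval_iff: "interval E S x y xs \<longleftrightarrow>
   (\<exists>u. xs = x # u @ [y] \<and> gp E xs \<and> x \<in> S \<and> y \<in> S \<and> set u \<inter> S = {})"
proof
  assume I: "interval E S x y xs"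
  then have g: "gp E xs" "length xs \<ge> 2" "hd xs = x" "last xs = y" "x \<in> S" "y \<in> S"
    and mid: "\<forall>i. 0 < i \<and> i < length xs - 1 \<longrightarrow> xs ! i \<notin> S"
    by (auto simp: interval_def fpath_gp)
  define u where "u = butlast (tl xs)"
  have "xs = hd xs # tl xs" using g by (cases xs) auto
  moreover have "tl xs \<noteq> []" using g by (cases xs) auto
  then have "tl xs = u @ [last (tl xs)]" unfolding u_def by simp
  moreover have "last (tl xs) = last xs" using \<open>tl xs \<noteq> []\<close> g by (cases xs) auto
  ultimately have xs: "xs = x # u @ [y]" using g by metis
  have "set u \<inter> S = {}"
  proof (rule ccontr)
    assume "set u \<inter> S \<noteq> {}"
    then obtain k where k: "k < length u" "u ! k \<in> S" by (auto simp: in_set_conv_nth)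
    have "xs ! Suc k = u ! k" using k xs by (simp add: nth_append)
    moreover have "0 < Suc k \<and> Suc k < length xs - 1" using k xs by simp
    ultimately show False using mid k by metis
  qed
  then show "\<exists>u. xs = x # u @ [y] \<and> gp E xs \<and> x \<in> S \<and> y \<in> S \<and> set u \<inter> S = {}"
    using xs g by blast
next
  assume "\<exists>u. xs = x # u @ [y] \<and> gp E xs \<and> x \<in> S \<and> y \<in> S \<and> set u \<inter> S = {}"
  then obtain u where u: "xs = x # u @ [y]" "gp E xs" "x \<in> S" "y \<in> S" "set u \<inter> S = {}" by blast
  have "\<forall>i. 0 < i \<and> i < length xs - 1 \<longrightarrow> xs ! i \<notin> S"
  proof (intro allI impI)
    fix i assume i: "0 < i \<and> i < length xs - 1"
    then obtain k where k: "i = Suc k" by (cases i) auto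
    then have "k < length u" using i u by simp
    then have "xs ! i = u ! k" "u ! k \<in> set u" using u k by (simp_all add: nth_append)
    then show "xs ! i \<notin> S" using u by auto
  qed
  then show "interval E S x y xs" using u by (auto simp: interval_def fpath_gp)
qed

lemma Ap_iff: "(x, y) \<in> Ap V E p \<longleftrightarrow>
   (\<exists>u. gp E (x # u @ [y]) \<and> x \<in> Vp V E p \<and> y \<in> Vp V E p \<and> set u \<inter> Vp V E p = {})"
  unfolding Ap_def interval_iff by blast

lemma Ap_Vp: "(x, y) \<in> Ap V E p \<Longrightarrow> x \<in> Vp V E p \<and> y \<in> Vp V E p"
  using Ap_iff by metis

lemma Vs_iff: "n \<in> Vs V E p s \<longleftrightarrow> n \<in> Vp V E p \<and>
   (\<exists>xs. gp E xs \<and> hd xs = s \<and> last xs = n \<and> set (butlast xs) \<inter> Vp V E p = {})"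
  unfolding Vs_def fpath_gp butlast_nth_iff by blast

lemma strip_iff: "strip V E p s ns \<longleftrightarrow> gp (Ap V E p) ns \<and> hd ns \<in> Vs V E p s \<and>
     (\<forall>k. 0 < k \<and> k < length ns \<longrightarrow> ns ! k \<in> Vp V E p - Vs V E p s) \<and>
     (\<exists>y. (last ns, y) \<in> Ap V E p \<and> y \<in> Vs V E p s)"
  unfolding strip_def by (simp add: fpath_gp)

lemma esc_Ap:
  assumes "(x, y) \<in> Ap V E p" "A \<subseteq> Vp V E p" "x \<notin> A" "esc E A y"
  shows "esc E A x"
proof -
  obtain u where u: "gp E (x # u @ [y])" "set u \<inter> Vp V E p = {}" using assms(1) Ap_iff by metis
  have "y \<notin> A" using assms(4) esc_notin by metis
  then have "set (x # u @ [y]) \<inter> A = {}" using u assms(2,3) by auto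
  then show ?thesis using esc_path[OF u(1)] assms(4) by simp
qed

lemma selfloop:
  assumes "(p, p) \<in> Ap V E p" "z \<in> Vp V E p"
  shows "z = p"
proof (rule ccontr)
  assume zp: "z \<noteq> p"
  obtain u where u: "gp E (p # u @ [p])" "set u \<inter> Vp V E p = {}" using assms(1) Ap_iff by metis
  have "set (p # u @ [p]) \<inter> {z} = {}" using u zp assms(2) by auto
  moreover have "length (p # u @ [p]) \<ge> 2" "hd (p # u @ [p]) = last (p # u @ [p])" by simp_all
  ultimately have "esc E {z} (hd (p # u @ [p]))" using esc_cycle[OF u(1)] by blast
  then show False using assms(2) Vp_iff by fastforce
qed

lemma esc_back:
  "gp E g \<Longrightarrow> esc E Q (last g) \<Longrightarrow> esc E Q (hd g) \<or> (\<exists>q\<in>Q. esc E (Q - {q}) q)"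
proof (induction g rule: gp.induct)
  case (3 E x y xs)
  have g: "(x, y) \<in> E" "gp E (y # xs)" using "3.prems"(1) by simp_all
  have l: "esc E Q (last (y # xs))" using "3.prems"(2) by simp
  have "esc E Q (hd (y # xs)) \<or> (\<exists>q\<in>Q. esc E (Q - {q}) q)" using "3.IH"[OF g(2) l] .
  then have "esc E Q y \<or> (\<exists>q\<in>Q. esc E (Q - {q}) q)" by simp
  then show ?case
  proof
    assume ey: "esc E Q y"
    show ?thesis
    proof (cases "x \<in> Q")
      case True
      have "esc E (Q - {x}) y" by (rule esc_mono[OF ey]) blast
      then have "esc E (Q - {x}) x" by (rule esc.step[where m = y, rotated 2]) (use g in simp_all)
      then show ?thesis using True by blast
    next
      case False
      have "esc E Q x" by (rule esc.step[where m = y, rotated 2, OF ey]) (use g False in simp_all)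
      then show ?thesis by simp
    qed
  next
    assume "\<exists>q\<in>Q. esc E (Q - {q}) q"
    then show ?thesis by blast
  qed
next
  case (2 E x) then show ?case by simp
next
  case (1 E) then show ?case by simp
qed

lemma allpaths:
  assumes A1: "(p, q1) \<in> Ap V E p" and A2: "(p, q2) \<in> Ap V E p" and q12: "q1 \<noteq> q2"
    and x: "x \<in> Vp V E p" "x \<noteq> p" and y: "y \<in> Vp V E p" "y \<noteq> p"
  shows "\<not> esc E {y} x"
proof
  assume ey: "esc E {y} x"
  have q1: "q1 \<in> Vp V E p" using A1 Ap_Vp by metis
  have q2: "q2 \<in> Vp V E p" using A2 Ap_Vp by metis
  have q1p: "q1 \<noteq> p"
  proof
    assume "q1 = p" then have "x = p" using selfloop A1 x(1) by metis
    with x(2) show False by simp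
  qed
  have q2p: "q2 \<noteq> p"
  proof
    assume "q2 = p" then have "x = p" using selfloop A2 x(1) by metis
    with x(2) show False by simp
  qed
  have K: "\<not> esc E {z} q" if "(p, q) \<in> Ap V E p" "z \<in> Vp V E p" "z \<noteq> p" for z q
  proof
    assume "esc E {z} q"
    then have "esc E {z} p" using esc_Ap[OF that(1)] that(2,3) by auto
    then show False using that(2) Vp_iff by fastforce
  qed
  have nx: "\<not> esc E {x} q1" using K[OF A1 x] .
  obtain g where g: "gp E g" "hd g = q1" "last g \<in> {x}" using notesc_path[OF nx] by blast
  have nQ: "\<not> esc E {q1, q2} x"
  proof
    assume "esc E {q1, q2} x"
    then have "esc E {q1, q2} (last g)" using g by simp
    from esc_back[OF g(1) this] show False
    proof
      assume h: "esc E {q1, q2} (hd g)"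
      from esc_notin[OF h] g(2) show False by simp
    next
      assume "\<exists>q\<in>{q1, q2}. esc E ({q1, q2} - {q}) q"
      then show False
      proof
        fix q assume qq: "q \<in> {q1, q2}" "esc E ({q1, q2} - {q}) q"
        from qq(1) have "q = q1 \<or> q = q2" by simp
        then show False
        proof
          assume "q = q1"
          then have "esc E {q2} q1" using \<open>esc E ({q1, q2} - {q}) q\<close> q12 by (simp add: insert_Diff_if)
          then show False using K[OF A1 q2 q2p] by simp
        next
          assume "q = q2"
          then have "esc E {q1} q2" using \<open>esc E ({q1, q2} - {q}) q\<close> q12 by (auto simp: insert_Diff_if)
          then show False using K[OF A2 q1 q1p] by simp
        qed
      qed
    qed
  qed
  have "\<exists>z\<in>{q1, q2}. esc E {y} z"
  proof (rule ccontr)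
    assume "\<not> ?thesis"
    then have "\<forall>z\<in>{q1, q2}. \<not> esc E {y} z" by blast
    from esc_split[OF ey this] have "esc E ({y} \<union> {q1, q2}) x" .
    then have "esc E {q1, q2} x" by (rule esc_mono) blast
    then show False using nQ by simp
  qed
  then obtain z where z: "z = q1 \<or> z = q2" "esc E {y} z" by blast
  from z(1) show False
  proof
    assume "z = q1" then show False using K[OF A1 y] z(2) by simp
  next
    assume "z = q2" then show False using K[OF A2 y] z(2) by simp
  qed
qed

lemma lift:
  "gp (Ap V E p) ns \<Longrightarrow> \<exists>bs. gp E bs \<and> hd bs = hd ns \<and> last bs = last ns \<and> set bs \<inter> Vp V E p \<subseteq> set ns"
proof (induction ns)
  case Nil then show ?case by simp
next
  case (Cons x ns)
  show ?case
  proof (cases "ns = []")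
    case True then show ?thesis by (intro exI[of _ "[x]"]) auto
  next
    case False
    then have e: "(x, hd ns) \<in> Ap V E p" and g: "gp (Ap V E p) ns" using Cons.prems by (auto simp: gp_Cons)
    obtain bs where bs: "gp E bs" "hd bs = hd ns" "last bs = last ns" "set bs \<inter> Vp V E p \<subseteq> set ns"
      using Cons.IH[OF g] by blast
    obtain u where u: "gp E (x # u @ [hd ns])" "set u \<inter> Vp V E p = {}" using e unfolding Ap_iff by blast
    define cs where "cs = (x # u @ [hd ns]) @ tl bs"
    have "gp E cs" unfolding cs_def using gp_join[OF u(1) bs(1)] bs(2) by simp
    moreover have "hd cs = x" by (simp add: cs_def)
    moreover have "last cs = last (x # ns)"
      unfolding cs_def using join_last[OF bs(1), of "x # u @ [hd ns]"] bs False by simp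
    moreover have "set cs \<inter> Vp V E p \<subseteq> set (x # ns)"
    proof -
      have "set cs \<subseteq> {x} \<union> set u \<union> {hd ns} \<union> set bs" using join_set[of "x # u @ [hd ns]" bs] by (auto simp: cs_def)
      moreover have "hd ns \<in> set ns" using False by simp
      ultimately show ?thesis using u(2) bs(4) by auto
    qed
    ultimately show ?thesis by (intro exI[of _ cs]) simp
  qed
qed

lemma gp_prefix: "gp E (xs @ ys) \<Longrightarrow> xs \<noteq> [] \<Longrightarrow> gp E xs"
  by (auto simp: gp_append)

lemma gp_suffix: "gp E (xs @ ys) \<Longrightarrow> ys \<noteq> [] \<Longrightarrow> gp E ys"
  by (auto simp: gp_append)

lemma proj:
  assumes "gp E xs" "hd xs \<in> Vp V E p" "last xs \<in> Vp V E p"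
  shows "gp (Ap V E p) (filter (\<lambda>x. x \<in> Vp V E p) xs)"
  using assms
proof (induction "length xs" arbitrary: xs rule: less_induct)
  case less
  obtain x rest where xs: "xs = x # rest" using less.prems by (cases xs) auto
  show ?case
  proof (cases "rest = []")
    case True then show ?thesis using xs less.prems by simp
  next
    case False
    then have "last rest \<in> Vp V E p" using less.prems xs by simp
    then have ex: "\<exists>z\<in>set rest. z \<in> Vp V E p" using False last_in_set by blast
    from split_list_first_prop[OF ex] obtain u z v where
      r: "rest = u @ z # v" "z \<in> Vp V E p" "\<forall>w\<in>set u. w \<notin> Vp V E p" by blast
    have gxs: "gp E ((x # u @ [z]) @ v)" using less.prems(1) xs r by simp
    have g1: "gp E (x # u @ [z])" using gp_prefix[OF gxs] by simp
    have "gp E ((x # u) @ (z # v))" using less.prems(1) xs r by simp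
    from gp_suffix[OF this] have g2: "gp E (z # v)" by simp
    have xV: "x \<in> Vp V E p" using less.prems(2) xs by simp
    have su: "set u \<inter> Vp V E p = {}" using r(3) by blast
    have e: "(x, z) \<in> Ap V E p" unfolding Ap_iff using g1 xV r(2) su by blast
    have len: "length (z # v) < length xs" using xs r by simp
    have lst: "last (z # v) \<in> Vp V E p" using less.prems(3) xs r by simp
    have ih: "gp (Ap V E p) (filter (\<lambda>x. x \<in> Vp V E p) (z # v))"
      using less.hyps[OF len g2 _ lst] r(2) by simp
    have fu: "filter (\<lambda>x. x \<in> Vp V E p) u = []" using r(3) by (simp add: filter_empty_conv)
    have "filter (\<lambda>x. x \<in> Vp V E p) xs = x # filter (\<lambda>x. x \<in> Vp V E p) (z # v)"
      using xs r(1) xV fu by simp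
    moreover have "filter (\<lambda>x. x \<in> Vp V E p) (z # v) = z # filter (\<lambda>x. x \<in> Vp V E p) v"
      using r(2) by simp
    ultimately show ?thesis using e ih by (simp add: gp_Cons)
  qed
qed


lemma len2: "xs \<noteq> [] \<Longrightarrow> hd xs \<noteq> last xs \<Longrightarrow> length xs \<ge> 2"
proof (cases xs)
  case (Cons x xs')
  assume h: "hd xs \<noteq> last xs"
  show ?thesis
  proof (cases xs')
    case Nil then show ?thesis using h Cons by simp
  next
    case (Cons y ys) then show ?thesis using \<open>xs = x # xs'\<close> by simp
  qed
qed simp

lemma cycle2:
  assumes "gp E d" "gp E e" "last d = hd e" "last e = hd d" "hd d \<noteq> last d"
    "set d \<inter> A = {}" "set e \<inter> A = {}"
  shows "esc E A (hd d)"
proof -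
  have dne: "d \<noteq> []" using assms(1) by (rule gp_ne)
  have g: "gp E (d @ tl e)" using gp_join[OF assms(1,2,3)] .
  have l: "length (d @ tl e) \<ge> 2" using len2[OF dne assms(5)] by simp
  have h: "hd (d @ tl e) = hd d" using dne by simp
  have la: "last (d @ tl e) = last e" using join_last[OF assms(2) assms(3) dne] .
  have s: "set (d @ tl e) \<inter> A = {}" using join_set[of d e] assms(6,7) by blast
  have "esc E A (hd (d @ tl e))" using esc_cycle[OF g l _ s] h la assms(4) by simp
  then show ?thesis using h by simp
qed

lemma first_in:
  assumes "gp E g" "hd g = s" "x \<in> set g" "x \<in> Vp V E p"
  shows "\<exists>k<length g. g ! k \<in> Vs V E p s \<and> (\<forall>t<k. g ! t \<notin> Vp V E p)"
proof -
  have ex: "\<exists>k. k < length g \<and> g ! k \<in> Vp V E p" using assms(3,4) by (auto simp: in_set_conv_nth)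
  define k where "k = (LEAST k. k < length g \<and> g ! k \<in> Vp V E p)"
  have k: "k < length g" "g ! k \<in> Vp V E p" using LeastI_ex[OF ex] unfolding k_def by auto
  have min: "g ! t \<notin> Vp V E p" if "t < k" for t
    using not_less_Least[of t "\<lambda>k. k < length g \<and> g ! k \<in> Vp V E p"] that k(1) unfolding k_def by auto
  define xs where "xs = take (Suc k) g"
  have "gp E xs" unfolding xs_def using gp_take[OF assms(1)] by simp
  moreover have "hd xs = s" unfolding xs_def using assms(2) by simp
  moreover have "last xs = g ! k" unfolding xs_def using k(1) by (simp add: take_Suc_conv_app_nth)
  moreover have "set (butlast xs) \<inter> Vp V E p = {}"
  proof -
    have "butlast xs = take k g" unfolding xs_def using k(1) by (simp add: take_Suc_conv_app_nth)
    moreover have "set (take k g) \<inter> Vp V E p = {}"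
    proof (rule ccontr)
      assume "set (take k g) \<inter> Vp V E p \<noteq> {}"
      then obtain w where w: "w \<in> set (take k g)" "w \<in> Vp V E p" by blast
      then obtain t where t: "t < length (take k g)" "take k g ! t = w" by (metis in_set_conv_nth)
      then have "t < k" "g ! t = w" by auto
      then show False using min w(2) by blast
    qed
    ultimately show ?thesis by simp
  qed
  ultimately have "g ! k \<in> Vs V E p s" unfolding Vs_iff using k(2) by blast
  then show ?thesis using k(1) min by blast
qed

lemma half_before:
  assumes A1: "(p, q1) \<in> Ap V E p" and A2: "(p, q2) \<in> Ap V E p" and q12: "q1 \<noteq> q2"
    and st: "strip V E p s1 ns" and cb: "contains_before ns a b"
    and ps1: "(p, s1) \<in> E" and ap: "a \<noteq> p" and bp: "b \<noteq> p" and ab: "a \<noteq> b"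
  shows "\<not> esc E {a} s1 \<and> \<not> rav E s1 a b"
proof -
  obtain i j where ij: "i < j" "j < length ns" "ns ! i = a" "ns ! j = b"
    using cb unfolding contains_before_def by blast
  have gA: "gp (Ap V E p) ns" and hV: "hd ns \<in> Vs V E p s1"
    and mid: "\<forall>k. 0 < k \<and> k < length ns \<longrightarrow> ns ! k \<in> Vp V E p - Vs V E p s1"
    using st unfolding strip_iff by blast+
  have VsVp: "Vs V E p s1 \<subseteq> Vp V E p" unfolding Vs_def by blast
  have nsVp: "ns ! k \<in> Vp V E p" if "k < length ns" for k
  proof (cases "k = 0")
    case True
    have "ns \<noteq> []" using that by auto
    then have "ns ! k = hd ns" using True by (simp add: hd_conv_nth)
    then show ?thesis using hV VsVp by auto
  next
    case False then show ?thesis using mid that by auto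
  qed
  have aV: "a \<in> Vp V E p" using nsVp ij by auto
  have bV: "b \<in> Vp V E p" using nsVp ij by auto
  have aP: "\<not> esc E {a} p" using aV unfolding Vp_iff by blast
  have n1: "\<not> esc E {a} s1"
  proof
    assume h: "esc E {a} s1"
    have "s1 \<notin> {a}" using esc_notin[OF h] .
    then have "set [p, s1] \<inter> {a} = {}" using ap by auto
    moreover have "gp E [p, s1]" using ps1 by simp
    ultimately have "esc E {a} (hd [p, s1])" using esc_path[of E "[p, s1]" "{a}"] h by simp
    then show False using aP by simp
  qed
  have n2: "\<not> rav E s1 a b"
  proof
    assume "rav E s1 a b"
    then obtain g where g: "gp E g" "hd g = s1" "last g = b" "a \<notin> set g" unfolding rav_def by blast
    have gne: "g \<noteq> []" using g(1) by (rule gp_ne)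
    have pg: "p \<notin> set g"
    proof
      assume "p \<in> set g"
      then obtain k where k: "k < length g" "g ! k = p" by (auto simp: in_set_conv_nth)
      define cy where "cy = p # take (Suc k) g"
      have t: "gp E (take (Suc k) g)" using gp_take[OF g(1)] by simp
      have th: "hd (take (Suc k) g) = s1" using g(2) by simp
      have "gp E cy" unfolding cy_def using t th ps1 by (simp add: gp_Cons)
      moreover have "length cy \<ge> 2" using k by (simp add: cy_def)
      moreover have "hd cy = last cy" using k by (simp add: cy_def take_Suc_conv_app_nth)
      moreover have "set cy \<inter> {a} = {}" using g(4) ap by (auto simp: cy_def dest: in_set_takeD)
      ultimately have "esc E {a} (hd cy)" by (rule esc_cycle)
      then show False using aP by (simp add: cy_def)
    qed
    have bg: "b \<in> set g" using gne g(3) by (metis last_in_set)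
    obtain k where k: "k < length g" "g ! k \<in> Vs V E p s1" "\<forall>t<k. g ! t \<notin> Vp V E p"
      using first_in[OF g(1) g(2) bg bV] by blast
    define c where "c = g ! k"
    have cV1: "c \<in> Vs V E p s1" using k(2) by (simp add: c_def)
    have cVp: "c \<in> Vp V E p" using cV1 VsVp by blast
    have cg: "c \<in> set g" using k(1) by (simp add: c_def)
    have cp: "c \<noteq> p" using cg pg by blast
    have ca: "c \<noteq> a" using cg g(4) by blast
    define al where "al = drop k g"
    have al: "gp E al" "hd al = c" "last al = b" "a \<notin> set al"
      using gp_drop[OF g(1) k(1)] k(1) g(3,4) set_drop_subset[of k g]
      by (auto simp: al_def c_def hd_drop_conv_nth)
    define mu where "mu = drop i (take (Suc j) ns)"
    have mu: "gp (Ap V E p) mu"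
      unfolding mu_def using gp_drop[OF gp_take[OF gA, of "Suc j"]] ij by simp
    have muh: "hd mu = a" unfolding mu_def using ij by (simp add: hd_drop_conv_nth)
    have mul: "last mu = b" unfolding mu_def using ij by (simp add: take_Suc_conv_app_nth)
    have cmu: "c \<notin> set mu"
    proof
      assume "c \<in> set mu"
      then obtain t where t: "t < length mu" "mu ! t = c" by (auto simp: in_set_conv_nth)
      have e: "mu ! t = ns ! (i + t)" and it: "i + t < length ns" using t ij by (auto simp: mu_def)
      show False
      proof (cases t)
        case 0 then show False using e t(2) ij(3) ca by simp
      next
        case (Suc t')
        then have "ns ! (i + t) \<in> Vp V E p - Vs V E p s1" using mid it by auto
        then show False using e t(2) cV1 by simp
      qed
    qed
    obtain be where be: "gp E be" "hd be = a" "last be = b" "set be \<inter> Vp V E p \<subseteq> set mu"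
      using lift[OF mu] muh mul by auto
    have cbe: "c \<notin> set be" using cmu be(4) cVp by blast
    have bbe: "b \<in> set be" using be(1,3) gp_ne last_in_set by metis
    have cb': "c \<noteq> b" using cbe bbe by blast
    have W1: "\<not> esc E {c} b" by (rule allpaths[OF A1 A2 q12 bV bp cVp cp])
    have W2: "\<not> esc E {a} b" by (rule allpaths[OF A1 A2 q12 bV bp aV ap])
    have W3: "\<not> esc E {a, c} b"
    proof
      assume "esc E {a, c} b"
      then have "esc E {a} b" by (rule esc_mono) blast
      then show False using W2 by simp
    qed
    obtain de where de: "gp E de" "hd de = b" "last de \<in> {a, c}" "set (butlast de) \<inter> {a, c} = {}"
      using notesc_path[OF W3] by blast
    have dne: "de \<noteq> []" using de(1) by (rule gp_ne)
    have sde: "set de = insert (last de) (set (butlast de))" by (rule set_bl[OF dne])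
    have "last de = a \<or> last de = c" using de(3) by simp
    then show False
    proof
      assume la: "last de = a"
      have "esc E {c} (hd de)"
      proof (rule cycle2[OF de(1) be(1)])
        show "last de = hd be" using la be(2) by simp
        show "last be = hd de" using be(3) de(2) by simp
        show "hd de \<noteq> last de" using la de(2) ab by simp
        show "set de \<inter> {c} = {}" using sde la de(4) ca by auto
        show "set be \<inter> {c} = {}" using cbe by auto
      qed
      then show False using W1 de(2) by simp
    next
      assume lc: "last de = c"
      have "esc E {a} (hd de)"
      proof (rule cycle2[OF de(1) al(1)])
        show "last de = hd al" using lc al(2) by simp
        show "last al = hd de" using al(3) de(2) by simp
        show "hd de \<noteq> last de" using lc de(2) cb' by simp
        show "set de \<inter> {a} = {}" using sde lc de(4) ca by auto
        show "set al \<inter> {a} = {}" using al(4) by auto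
      qed
      then show False using W2 de(2) by simp
    qed
  qed
  show ?thesis using n1 n2 by blast
qed


lemma rav_join:
  assumes "gp E d" "gp E e" "last d = hd e" "hd d = s" "last e = t" "x \<notin> set d" "x \<notin> set e"
  shows "rav E s x t"
proof -
  have dne: "d \<noteq> []" using assms(1) by (rule gp_ne)
  have "gp E (d @ tl e)" using gp_join[OF assms(1,2,3)] .
  moreover have "hd (d @ tl e) = s" using dne assms(4) by simp
  moreover have "last (d @ tl e) = t" using join_last[OF assms(2) assms(3) dne] assms(5) by simp
  moreover have "x \<notin> set (d @ tl e)" using join_set[of d e] assms(6,7) by blast
  ultimately show ?thesis unfolding rav_def by blast
qed

lemma gp_mid_edge: "gp E (xs @ ys) \<Longrightarrow> xs \<noteq> [] \<Longrightarrow> ys \<noteq> [] \<Longrightarrow> (last xs, hd ys) \<in> E"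
  by (auto simp: gp_append)

lemma last_in:
  "gp E g \<Longrightarrow> set g \<inter> S \<noteq> {} \<Longrightarrow>
   \<exists>d. gp E d \<and> hd d \<in> S \<and> last d = last g \<and> (\<forall>k. 0 < k \<and> k < length d \<longrightarrow> d ! k \<notin> S) \<and> set d \<subseteq> set g"
proof (induction g)
  case Nil then show ?case by simp
next
  case (Cons x g')
  show ?case
  proof (cases "set g' \<inter> S \<noteq> {}")
    case True
    then have gne: "g' \<noteq> []" by auto
    then have "gp E g'" using Cons.prems(1) by (simp add: gp_Cons)
    then obtain d where d: "gp E d" "hd d \<in> S" "last d = last g'"
      "\<forall>k. 0 < k \<and> k < length d \<longrightarrow> d ! k \<notin> S" "set d \<subseteq> set g'"
      using Cons.IH True by blast
    have "last d = last (x # g')" using d(3) gne by simp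
    moreover have "set d \<subseteq> set (x # g')" using d(5) by auto
    ultimately show ?thesis using d by blast
  next
    case False
    then have xS: "x \<in> S" using Cons.prems(2) by auto
    have "\<forall>k. 0 < k \<and> k < length (x # g') \<longrightarrow> (x # g') ! k \<notin> S"
    proof (intro allI impI)
      fix k assume k: "0 < k \<and> k < length (x # g')"
      then obtain k' where k': "k = Suc k'" by (cases k) auto
      then have "(x # g') ! k = g' ! k'" "g' ! k' \<in> set g'" using k by auto
      then show "(x # g') ! k \<notin> S" using False by auto
    qed
    then show ?thesis using Cons.prems(1) xS by (intro exI[of _ "x # g'"]) auto
  qed
qed

lemma F2:
  assumes "\<not> esc E {b} a" "a \<noteq> b"
  shows "\<exists>d. gp E d \<and> hd d = a \<and> last d = b \<and> a \<notin> set (tl d)"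
proof -
  have "succs E a \<noteq> {}"
  proof
    assume "succs E a = {}"
    have "esc E {b} a" by (rule esc.sink) (use \<open>succs E a = {}\<close> assms(2) in auto)
    then show False using assms(1) by simp
  qed
  then obtain m where m: "(a, m) \<in> E" by (auto simp: succs_def)
  have nm: "\<not> esc E {b} m"
  proof
    assume em: "esc E {b} m"
    have "esc E {b} a" by (rule esc.step[where m = m]) (use em m assms(2) in auto)
    then show False using assms(1) by simp
  qed
  have nm2: "\<not> esc E {a, b} m"
  proof
    assume "esc E {a, b} m"
    then have "esc E {b} m" by (rule esc_mono) blast
    then show False using nm by simp
  qed
  obtain et where et: "gp E et" "hd et = m" "last et \<in> {a, b}" "set (butlast et) \<inter> {a, b} = {}"
    using notesc_path[OF nm2] by blast
  have ene: "et \<noteq> []" using et(1) by (rule gp_ne)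
  have set_et: "set et = insert (last et) (set (butlast et))" by (rule set_bl[OF ene])
  have ge: "gp E (a # et)" using et(1,2) m by (simp add: gp_Cons)
  have "last et = a \<or> last et = b" using et(3) by simp
  then show ?thesis
  proof
    assume la: "last et = a"
    have "esc E {b} (hd (a # et))"
    proof (rule esc_cycle[OF ge])
      show "2 \<le> length (a # et)" using ene by (cases et) auto
      show "hd (a # et) = last (a # et)" using la ene by simp
      show "set (a # et) \<inter> {b} = {}" using set_et la et(4) assms(2) by auto
    qed
    then show ?thesis using assms(1) by simp
  next
    assume lb: "last et = b"
    have "a \<notin> set et" using set_et lb et(4) assms(2) by auto
    then show ?thesis using ge lb ene by (intro exI[of _ "a # et"]) auto
  qed
qed

lemma filter_butlast: "xs \<noteq> [] \<Longrightarrow> P (last xs) \<Longrightarrow> filter P (butlast xs) = butlast (filter P xs)"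
proof -
  assume "xs \<noteq> []" "P (last xs)"
  then have "xs = butlast xs @ [last xs]" by simp
  have "filter P (butlast xs @ [last xs]) = filter P (butlast xs) @ [last xs]" using \<open>P (last xs)\<close>
    by simp
  then have "filter P xs = filter P (butlast xs) @ [last xs]" using \<open>xs = butlast xs @ [last xs]\<close>
    by simp
  then show ?thesis by simp
qed


lemma notesc_p_edge:
  assumes "\<not> esc E A p" "(p, s) \<in> E" "p \<notin> A"
  shows "\<not> esc E A s"
proof
  assume h: "esc E A s"
  have "esc E A p" by (rule esc.step[where m = s]) (use h assms(2,3) in auto)
  then show False using assms(1) by simp
qed

lemma half_two:
  assumes aV: "a \<in> Vp V E p" and bV: "b \<in> Vp V E p" and pV: "p \<in> V" and ab: "a \<noteq> b"
    and ps1: "(p, s1) \<in> E" and ps2: "(p, s2) \<in> E"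
    and B1: "\<not> esc E {a} s1" "\<not> rav E s1 a b" and B2: "\<not> esc E {b} s2" "\<not> rav E s2 b a"
  shows "\<exists>y z. y \<noteq> z \<and> (p, y) \<in> Ap V E p \<and> (p, z) \<in> Ap V E p"
proof -
  have "\<not> esc E {p} p"
  proof
    assume "esc E {p} p"
    from esc_notin[OF this] show False by simp
  qed
  then have pVp: "p \<in> Vp V E p" unfolding Vp_iff using pV by blast
  have entry: "\<exists>g. gp E g \<and> hd g = s \<and> last g \<in> Vp V E p \<and> set (butlast g) \<inter> Vp V E p = {} \<and>
      (p, last g) \<in> Ap V E p"
    if ns: "\<not> esc E {x} s" and xV: "x \<in> Vp V E p" and ps: "(p, s) \<in> E" for s x
  proof -
    have "\<not> esc E (Vp V E p) s"
    proof
      assume "esc E (Vp V E p) s"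
      then have "esc E {x} s" by (rule esc_mono) (use xV in blast)
      then show False using ns by simp
    qed
    from notesc_path[OF this] obtain g where g: "gp E g" "hd g = s" "last g \<in> Vp V E p" "set (butlast g) \<inter> Vp V E p = {}"
      by blast
    have gne: "g \<noteq> []" using g(1) by (rule gp_ne)
    have "gp E (p # g)" using g(1,2) ps by (simp add: gp_Cons)
    then have "gp E (p # butlast g @ [last g])" using gne by simp
    then have "(p, last g) \<in> Ap V E p" unfolding Ap_iff using pVp g(3,4) by blast
    then show ?thesis using g by blast
  qed
  obtain g1 where g1: "gp E g1" "hd g1 = s1" "last g1 \<in> Vp V E p" "set (butlast g1) \<inter> Vp V E p = {}"
      "(p, last g1) \<in> Ap V E p" using entry[OF B1(1) aV ps1] by blast
  obtain g2 where g2: "gp E g2" "hd g2 = s2" "last g2 \<in> Vp V E p" "set (butlast g2) \<inter> Vp V E p = {}"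
      "(p, last g2) \<in> Ap V E p" using entry[OF B2(1) bV ps2] by blast
  have g1ne: "g1 \<noteq> []" using g1(1) by (rule gp_ne)
  have g2ne: "g2 \<noteq> []" using g2(1) by (rule gp_ne)
  have sg1: "set g1 = insert (last g1) (set (butlast g1))" by (rule set_bl[OF g1ne])
  have sg2: "set g2 = insert (last g2) (set (butlast g2))" by (rule set_bl[OF g2ne])
  have "last g1 \<noteq> last g2"
  proof
    assume q: "last g1 = last g2"
    define q where "q = last g1"
    have qb: "q \<noteq> b"
    proof
      assume "q = b"
      then have "a \<notin> set g1" using sg1 g1(4) aV ab q_def by auto
      then have "rav E s1 a b" unfolding rav_def using g1 \<open>q = b\<close> q_def by blast
      then show False using B1(2) by simp
    qed
    have qa: "q \<noteq> a"
    proof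
      assume "q = a"
      then have "b \<notin> set g2" using sg2 g2(4) bV ab q_def q by auto
      then have "rav E s2 b a" unfolding rav_def using g2 \<open>q = a\<close> q_def q by auto
      then show False using B2(2) by simp
    qed
    have a1: "a \<notin> set g1" using sg1 g1(4) aV qa q_def by auto
    have b2: "b \<notin> set g2" using sg2 g2(4) bV qb q_def q by auto
    have nq: "\<not> esc E {a} q"
    proof
      assume h: "esc E {a} q"
      have "set g1 \<inter> {a} = {}" using a1 by auto
      then have "esc E {a} (hd g1)" using esc_path[OF g1(1)] h q_def by simp
      then show False using B1(1) g1(2) by simp
    qed
    have nq2: "\<not> esc E {a, b} q"
    proof
      assume "esc E {a, b} q"
      then have "esc E {a} q" by (rule esc_mono) blast
      then show False using nq by simp
    qed
    obtain th where th: "gp E th" "hd th = q" "last th \<in> {a, b}" "set (butlast th) \<inter> {a, b} = {}"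
      using notesc_path[OF nq2] by blast
    have thne: "th \<noteq> []" using th(1) by (rule gp_ne)
    have sth: "set th = insert (last th) (set (butlast th))" by (rule set_bl[OF thne])
    have "last th = a \<or> last th = b" using th(3) by simp
    then show False
    proof
      assume lb: "last th = b"
      have "a \<notin> set th" using sth lb th(4) ab by auto
      then have "rav E s1 a b"
        using rav_join[OF g1(1) th(1) _ g1(2) lb a1] q_def th(2) by simp
      then show False using B1(2) by simp
    next
      assume la: "last th = a"
      have "b \<notin> set th" using sth la th(4) ab by auto
      then have "rav E s2 b a"
        using rav_join[OF g2(1) th(1) _ g2(2) la b2] q_def q th(2) by simp
      then show False using B2(2) by simp
    qed
  qed
  then show ?thesis using g1(5) g2(5) by blast
qed


lemma half_strip:
  assumes aV: "a \<in> Vp V E p" and bV: "b \<in> Vp V E p" and ap: "a \<noteq> p" and bp: "b \<noteq> p" and ab: "a \<noteq> b"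
    and ps1: "(p, s1) \<in> E" and ps2: "(p, s2) \<in> E" and succ: "succs E p = {s1, s2}"
    and B1: "\<not> esc E {a} s1" "\<not> rav E s1 a b" and B2: "\<not> esc E {b} s2" "\<not> rav E s2 b a"
  shows "\<exists>ns. strip V E p s1 ns \<and> contains_before ns a b"
proof -
  define V1 where "V1 = Vs V E p s1"
  define P where "P = Vp V E p"
  have VsVp: "V1 \<subseteq> P" unfolding V1_def P_def Vs_def by blast
  have aP: "a \<in> P" "b \<in> P" using aV bV by (simp_all add: P_def)
  have V1iff: "n \<in> V1 \<longleftrightarrow> n \<in> P \<and> (\<exists>xs. gp E xs \<and> hd xs = s1 \<and> last xs = n \<and> set (butlast xs) \<inter> P = {})" for n
    unfolding V1_def P_def by (rule Vs_iff)
  have bpn: "\<not> esc E {b} p" using bV unfolding Vp_iff by blast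
  obtain g1 where g1: "gp E g1" "hd g1 = s1" "last g1 \<in> {a}" "set (butlast g1) \<inter> {a} = {}"
    using notesc_path[OF B1(1)] by blast
  have g1ne: "g1 \<noteq> []" using g1(1) by (rule gp_ne)
  have la1: "last g1 = a" using g1(3) by simp
  have bg1: "b \<notin> set g1"
  proof
    assume "b \<in> set g1"
    then obtain k where k: "k < length g1" "g1 ! k = b" by (auto simp: in_set_conv_nth)
    have "k \<noteq> length g1 - 1" using k la1 ab g1ne by (auto simp: last_conv_nth)
    then have ks: "Suc k < length g1" using k by simp
    define h where "h = take (Suc k) g1"
    have "gp E h" unfolding h_def using gp_take[OF g1(1)] by simp
    moreover have "hd h = s1" unfolding h_def using g1(2) by simp
    moreover have "last h = b" unfolding h_def using k by (simp add: take_Suc_conv_app_nth)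
    moreover have "a \<notin> set h"
    proof -
      have "h = take (Suc k) (butlast g1)" unfolding h_def using ks by (simp add: take_butlast)
      then have "set h \<subseteq> set (butlast g1)" using set_take_subset by metis
      then show ?thesis using g1(4) by blast
    qed
    ultimately show False using B1(2) unfolding rav_def by blast
  qed
  have ag1: "a \<in> set g1" using la1 g1ne by (metis last_in_set)
  obtain k0 where k0: "k0 < length g1" "g1 ! k0 \<in> Vs V E p s1"
    using first_in[OF g1(1) g1(2) ag1 aV] by blast
  have "set g1 \<inter> V1 \<noteq> {}" using k0 nth_mem unfolding V1_def by blast
  then obtain d where d: "gp E d" "hd d \<in> V1" "last d = last g1"
      "\<forall>k. 0 < k \<and> k < length d \<longrightarrow> d ! k \<notin> V1" "set d \<subseteq> set g1"
    using last_in[OF g1(1) \<open>set g1 \<inter> V1 \<noteq> {}\<close>] by blast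
  define c where "c = hd d"
  have dne: "d \<noteq> []" using d(1) by (rule gp_ne)
  have lad: "last d = a" using d(3) la1 by simp
  have bd: "b \<notin> set d" using d(5) bg1 by blast
  have cV1: "c \<in> V1" using d(2) by (simp add: c_def)
  have cP: "c \<in> P" using cV1 VsVp by blast
  have cd: "c \<in> set d" using dne by (simp add: c_def)
  have cb: "c \<noteq> b" using cd bd by blast
  have cp: "c \<noteq> p"
  proof
    assume cp: "c = p"
    have "hd d \<noteq> last d" using cp lad ap c_def by simp
    then have l2: "length d \<ge> 2" using len2[OF dne] by simp
    have e1: "(d ! 0, d ! 1) \<in> E" using gp_edge[OF d(1), of 0] l2 by simp
    have "d ! 0 = p" using cp dne by (simp add: c_def hd_conv_nth)
    then have "d ! 1 \<in> succs E p" using e1 by (simp add: succs_def)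
    then have "d ! 1 = s1 \<or> d ! 1 = s2" using succ by simp
    define d' where "d' = tl d"
    have gd': "gp E d'" unfolding d'_def using gp_drop[OF d(1), of 1] l2 by (simp add: drop_Suc)
    have hd': "hd d' = d ! 1"
    proof -
      obtain x1 x2 xr where "d = x1 # x2 # xr" using l2 by (cases d; cases "tl d") auto
      then show ?thesis unfolding d'_def by simp
    qed
    have ld': "last d' = a" unfolding d'_def using l2 lad by (cases d) auto
    have bd': "b \<notin> set d'" unfolding d'_def using bd by (cases d) auto
    from \<open>d ! 1 = s1 \<or> d ! 1 = s2\<close> show False
    proof
      assume "d ! 1 = s2"
      then have "rav E s2 b a" unfolding rav_def using gd' hd' ld' bd' by auto
      then show False using B2(2) by simp
    next
      assume "d ! 1 = s1"
      have ad': "a \<in> set d'" using ld' gd' gp_ne last_in_set by metis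
      obtain k where k: "k < length d'" "d' ! k \<in> Vs V E p s1"
        using first_in[OF gd' _ ad' aV] hd' \<open>d ! 1 = s1\<close> by blast
      have "d' ! k = d ! Suc k" unfolding d'_def using k(1) by (simp add: d'_def nth_tl)
      moreover have "Suc k < length d" using k(1) by (simp add: d'_def)
      ultimately have "d' ! k \<notin> V1" using d(4) by auto
      then show False using k(2) V1_def by simp
    qed
  qed
  have ba: "\<not> esc E {b} a"
  proof
    assume h: "esc E {b} a"
    have "set g1 \<inter> {b} = {}" using bg1 by auto
    then have "esc E {b} s1" using esc_path[OF g1(1)] h la1 g1(2) by simp
    then show False using notesc_p_edge[OF bpn ps1] bp by simp
  qed
  obtain d2 where d2: "gp E d2" "hd d2 = a" "last d2 = b" "a \<notin> set (tl d2)"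
    using F2[OF ba ab] by blast
  have d2ne: "d2 \<noteq> []" using d2(1) by (rule gp_ne)
  have d2l: "length d2 \<ge> 2" using len2[OF d2ne] d2 ab by simp
  have td2ne: "tl d2 \<noteq> []" using d2l by (cases d2) auto
  have btd2: "b \<in> set (tl d2)" using d2l d2(3) by (cases d2) auto
  have t2: "set (tl d2) \<inter> V1 = {}"
  proof (rule ccontr)
    assume "set (tl d2) \<inter> V1 \<noteq> {}"
    then obtain z where z: "z \<in> set (tl d2)" "z \<in> V1" by blast
    obtain xi where xi: "gp E xi" "hd xi = s1" "last xi = z" "set (butlast xi) \<inter> P = {}"
      using z(2) V1iff by blast
    have gtd2: "gp E (tl d2)" using gp_drop[OF d2(1), of 1] d2l by (simp add: drop_Suc)
    obtain rh where rh: "gp E rh" "hd rh = z" "last rh = last (tl d2)" "set rh \<subseteq> set (tl d2)"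
      using suffix_from[OF gtd2 z(1)] by blast
    have "last (tl d2) = b" using d2(3) td2ne by (cases d2) auto
    have xine: "xi \<noteq> []" using xi(1) by (rule gp_ne)
    have "a \<notin> set xi"
    proof -
      have "z \<noteq> a" using z(1) d2(4) by blast
      then show ?thesis using set_bl[OF xine] xi(3,4) aP by auto
    qed
    moreover have "a \<notin> set rh" using rh(4) d2(4) by blast
    ultimately have "rav E s1 a b"
      using rav_join[OF xi(1) rh(1)] xi(2,3) rh(2,3) \<open>last (tl d2) = b\<close> by simp
    then show False using B1(2) by simp
  qed
  have bV1: "b \<notin> V1" using t2 btd2 by blast
  have nV1: "\<not> esc E V1 b"
  proof
    assume h: "esc E V1 b"
    have cpn: "\<not> esc E {c} p" using cP unfolding P_def Vp_iff by blast
    have cs2: "\<not> esc E {c} s2" using notesc_p_edge[OF cpn ps2] cp by simp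
    have nbc: "\<not> esc E {b, c} s2"
    proof
      assume "esc E {b, c} s2"
      then have "esc E {b} s2" by (rule esc_mono) blast
      then show False using B2(1) by simp
    qed
    obtain et where et: "gp E et" "hd et = s2" "last et \<in> {b, c}" "set (butlast et) \<inter> {b, c} = {}"
      using notesc_path[OF nbc] by blast
    have ene: "et \<noteq> []" using et(1) by (rule gp_ne)
    have set_et: "set et = insert (last et) (set (butlast et))" by (rule set_bl[OF ene])
    have "last et = b \<or> last et = c" using et(3) by simp
    then show False
    proof
      assume lc: "last et = c"
      have "b \<notin> set et" using set_et lc et(4) cb by auto
      then have "rav E s2 b a"
        using rav_join[OF et(1) d(1)] lc c_def et(2) lad bd by simp
      then show False using B2(2) by simp
    next
      assume lb: "last et = b"
      have ec: "esc E {c} b" by (rule esc_mono[OF h]) (use cV1 in blast)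
      have "set et \<inter> {c} = {}" using set_et lb et(4) cb by auto
      then have "esc E {c} s2" using esc_path[OF et(1)] ec lb et(2) by simp
      then show False using cs2 by simp
    qed
  qed
  obtain d3 where d3: "gp E d3" "hd d3 = b" "last d3 \<in> V1" "set (butlast d3) \<inter> V1 = {}"
    using notesc_path[OF nV1] by blast
  define y where "y = last d3"
  have d3ne: "d3 \<noteq> []" using d3(1) by (rule gp_ne)
  have yb: "y \<noteq> b" using d3(3) bV1 y_def by blast
  have d3l: "length d3 \<ge> 2" using len2[OF d3ne] d3(2) yb y_def by simp
  have td3ne: "tl d3 \<noteq> []" using d3l by (cases d3) auto
  have yP: "y \<in> P" using d3(3) VsVp y_def by blast
  define z1 where "z1 = d @ tl d2"
  define z where "z = z1 @ tl d3"
  have gz1: "gp E z1" unfolding z1_def using gp_join[OF d(1) d2(1)] lad d2(2) by simp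
  have lz1: "last z1 = b" unfolding z1_def using join_last[OF d2(1) _ dne] lad d2(2,3) by simp
  have z1ne: "z1 \<noteq> []" unfolding z1_def using dne by simp
  have gz: "gp E z" unfolding z_def using gp_join[OF gz1 d3(1)] lz1 d3(2) by simp
  have hz: "hd z = c" unfolding z_def z1_def c_def using dne by simp
  have lz: "last z = y" unfolding z_def using join_last[OF d3(1) _ z1ne] lz1 d3(2) y_def by simp
  have zne: "z \<noteq> []" using gz by (rule gp_ne)
  define nf where "nf = filter (\<lambda>x. x \<in> P) z"
  have gnf: "gp (Ap V E p) nf" unfolding nf_def P_def using proj[OF gz] hz lz cP yP by (simp add: P_def)
  define D1 where "D1 = butlast d"
  define D2 where "D2 = butlast (tl d2)"
  define D3 where "D3 = butlast (tl d3)"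
  define F1 where "F1 = filter (\<lambda>x. x \<in> P) D1"
  define F2 where "F2 = filter (\<lambda>x. x \<in> P) D2"
  define F3 where "F3 = filter (\<lambda>x. x \<in> P) D3"
  have ltd2: "last (tl d2) = b" using d2(3) td2ne by (cases d2) auto
  have ltd3: "last (tl d3) = y" using y_def td3ne by (cases d3) auto
  have dd: "d = D1 @ [a]"
  proof -
    have "butlast d @ [last d] = d" using dne by simp
    then show ?thesis using lad by (simp add: D1_def)
  qed
  have dd2: "tl d2 = D2 @ [b]"
  proof -
    have "butlast (tl d2) @ [last (tl d2)] = tl d2" using td2ne by simp
    then show ?thesis using ltd2 by (simp add: D2_def)
  qed
  have dd3: "tl d3 = D3 @ [y]"
  proof -
    have "butlast (tl d3) @ [last (tl d3)] = tl d3" using td3ne by simp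
    then show ?thesis using ltd3 by (simp add: D3_def)
  qed
  have zdec: "z = D1 @ [a] @ D2 @ [b] @ D3 @ [y]"
    unfolding z_def z1_def dd dd2 dd3 by simp
  have nfdec: "nf = F1 @ a # F2 @ b # F3 @ [y]"
    unfolding nf_def F1_def F2_def F3_def using zdec aP yP by simp
  define ns where "ns = F1 @ a # F2 @ b # F3"
  have nfns: "nf = ns @ [y]" using nfdec ns_def by simp
  have nsne: "ns \<noteq> []" by (simp add: ns_def)
  have gns: "gp (Ap V E p) ns" using gp_prefix[of "Ap V E p" ns "[y]"] gnf nfns nsne by simp
  have eny: "(last ns, y) \<in> Ap V E p" using gp_mid_edge[of "Ap V E p" ns "[y]"] gnf nfns nsne by simp
  obtain zt where zt: "z = c # zt" using zne hz by (cases z) auto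
  have nfc: "nf = c # filter (\<lambda>x. x \<in> P) (tl z)"
    unfolding nf_def using zt cP by simp
  have hns: "hd ns = c"
  proof -
    have "hd nf = hd ns" using nfns nsne by simp
    then show ?thesis using nfc by simp
  qed
  have tz: "tl z = (tl d @ tl d2) @ tl d3" unfolding z_def z1_def using dne by simp
  have tzne: "tl z \<noteq> []" using tz td3ne by simp
  have ltz: "last (tl z) = y" using tz td3ne ltd3 by simp
  have btz: "butlast (tl z) = (tl d @ tl d2) @ butlast (tl d3)" using tz td3ne by (simp add: butlast_append)
  have sbtz: "set (butlast (tl z)) \<inter> V1 = {}"
  proof -
    have s1: "set (tl d) \<inter> V1 = {}"
    proof (rule ccontr)
      assume "set (tl d) \<inter> V1 \<noteq> {}"
      then obtain w where w: "w \<in> set (tl d)" "w \<in> V1" by blast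
      then obtain t where t: "t < length (tl d)" "tl d ! t = w" by (metis in_set_conv_nth)
      then have "d ! Suc t = w" "Suc t < length d" by (simp_all add: nth_tl)
      then show False using d(4) w(2) by auto
    qed
    have s3: "set (butlast (tl d3)) \<inter> V1 = {}"
    proof -
      have "set (tl (butlast d3)) \<subseteq> set (butlast d3)" by (cases "butlast d3") auto
      then have "set (butlast (tl d3)) \<subseteq> set (butlast d3)" by (simp add: butlast_tl)
      then show ?thesis using d3(4) by blast
    qed
    show ?thesis using btz s1 t2 s3 by auto
  qed
  have tns: "tl ns = filter (\<lambda>x. x \<in> P) (butlast (tl z))"
  proof -
    have "tl nf = filter (\<lambda>x. x \<in> P) (tl z)" using nfc by simp
    then have "butlast (tl nf) = filter (\<lambda>x. x \<in> P) (butlast (tl z))"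
      using filter_butlast[OF tzne, of "\<lambda>x. x \<in> P"] ltz yP by simp
    moreover have "butlast (tl nf) = tl ns" using nfns nsne by (simp add: butlast_tl)
    ultimately show ?thesis by simp
  qed
  have setns: "set ns \<subseteq> P" unfolding ns_def F1_def F2_def F3_def using aP by auto
  have mid: "\<forall>k. 0 < k \<and> k < length ns \<longrightarrow> ns ! k \<in> Vp V E p - Vs V E p s1"
  proof (intro allI impI)
    fix k assume k: "0 < k \<and> k < length ns"
    then obtain k' where k': "k = Suc k'" by (cases k) auto
    have "ns ! k = tl ns ! k'" using k k' nsne by (simp add: nth_tl)
    moreover have "k' < length (tl ns)" using k k' by simp
    ultimately have "ns ! k \<in> set (tl ns)" by (metis nth_mem)
    then have "ns ! k \<in> set (butlast (tl z))" using tns by simp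
    then have "ns ! k \<notin> V1" using sbtz by blast
    moreover have "ns ! k \<in> P" using setns k nth_mem by blast
    ultimately show "ns ! k \<in> Vp V E p - Vs V E p s1" unfolding P_def V1_def by simp
  qed
  have "strip V E p s1 ns"
    unfolding strip_iff using gns hns cV1 mid eny d3(3) y_def unfolding V1_def by auto
  moreover have "contains_before ns a b"
  proof -
    have "ns ! length F1 = a" by (simp add: ns_def)
    moreover have "ns ! (Suc (length F1 + length F2)) = b" by (simp add: ns_def nth_append)
    moreover have "Suc (length F1 + length F2) < length ns" by (simp add: ns_def)
    moreover have "length F1 < Suc (length F1 + length F2)" by simp
    ultimately show ?thesis unfolding contains_before_def by blast
  qed
  ultimately show ?thesis by blast
qed


lemma cb_mem:
  assumes "strip V E p s ns" "contains_before ns a b"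
  shows "a \<in> Vp V E p \<and> b \<in> Vp V E p"
proof -
  have hV: "hd ns \<in> Vs V E p s" and mid: "\<forall>k. 0 < k \<and> k < length ns \<longrightarrow> ns ! k \<in> Vp V E p - Vs V E p s"
    using assms(1) unfolding strip_iff by blast+
  have VsVp: "Vs V E p s \<subseteq> Vp V E p" unfolding Vs_def by blast
  have nsVp: "ns ! k \<in> Vp V E p" if "k < length ns" for k
  proof (cases "k = 0")
    case True
    have "ns \<noteq> []" using that by auto
    then have "ns ! k = hd ns" using True by (simp add: hd_conv_nth)
    then show ?thesis using hV VsVp by auto
  next
    case False then show ?thesis using mid that by auto
  qed
  obtain i j where ij: "i < j" "j < length ns" "ns ! i = a" "ns ! j = b"
    using assms(2) unfolding contains_before_def by blast
  then show ?thesis using nsVp[of i] nsVp[of j] by auto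
qed

theorem theorem4p13:
  fixes V :: "'v set" and E :: "('v \<times> 'v) set" and p a b s1 s2 :: 'v
  assumes "cfg V E"
    and "p \<in> V" and "a \<in> V" and "b \<in> V"
    and "p \<noteq> a" and "p \<noteq> b" and "a \<noteq> b"
    and "s1 \<noteq> s2" and "succs E p = {s1, s2}"
  shows "DOD E p s1 s2 a b \<longleftrightarrow>
           ((\<exists>y z. y \<noteq> z \<and> (p, y) \<in> Ap V E p \<and> (p, z) \<in> Ap V E p) \<and>
            (\<exists>ns. strip V E p s1 ns \<and> contains_before ns a b) \<and>
            (\<exists>ns. strip V E p s2 ns \<and> contains_before ns b a))"
proof -
  have "s1 \<in> succs E p" "s2 \<in> succs E p" using assms(9) by simp_all
  then have ps1: "(p, s1) \<in> E" and ps2: "(p, s2) \<in> E" by (simp_all add: succs_def)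
  have succ2: "succs E p = {s2, s1}" using assms(9) by auto
  have ap: "a \<noteq> p" and bp: "b \<noteq> p" and ab: "a \<noteq> b" and ba: "b \<noteq> a" using assms(5,6,7) by auto
  have DODiff: "DOD E p s1 s2 a b \<longleftrightarrow> \<not> esc E {a} p \<and> \<not> esc E {b} p \<and>
      (\<not> esc E {a} s1 \<and> \<not> rav E s1 a b) \<and> (\<not> esc E {b} s2 \<and> \<not> rav E s2 b a)"
    unfolding DOD_def onall_esc before_esc by blast
  show ?thesis
  proof
    assume "DOD E p s1 s2 a b"
    then have H: "\<not> esc E {a} p" "\<not> esc E {b} p" "\<not> esc E {a} s1" "\<not> rav E s1 a b"
      "\<not> esc E {b} s2" "\<not> rav E s2 b a" using DODiff by blast+
    have aV: "a \<in> Vp V E p" using H(1) assms(3) unfolding Vp_iff by blast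
    have bV: "b \<in> Vp V E p" using H(2) assms(4) unfolding Vp_iff by blast
    have 1: "\<exists>y z. y \<noteq> z \<and> (p, y) \<in> Ap V E p \<and> (p, z) \<in> Ap V E p"
      using half_two[OF aV bV assms(2) ab ps1 ps2 H(3) H(4) H(5) H(6)] .
    have 2: "\<exists>ns. strip V E p s1 ns \<and> contains_before ns a b"
      using half_strip[OF aV bV ap bp ab ps1 ps2 assms(9) H(3) H(4) H(5) H(6)] .
    have 3: "\<exists>ns. strip V E p s2 ns \<and> contains_before ns b a"
      using half_strip[OF bV aV bp ap ba ps2 ps1 succ2 H(5) H(6) H(3) H(4)] .
    show "(\<exists>y z. y \<noteq> z \<and> (p, y) \<in> Ap V E p \<and> (p, z) \<in> Ap V E p) \<and>
          (\<exists>ns. strip V E p s1 ns \<and> contains_before ns a b) \<and>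
          (\<exists>ns. strip V E p s2 ns \<and> contains_before ns b a)" using 1 2 3 by blast
  next
    assume R: "(\<exists>y z. y \<noteq> z \<and> (p, y) \<in> Ap V E p \<and> (p, z) \<in> Ap V E p) \<and>
          (\<exists>ns. strip V E p s1 ns \<and> contains_before ns a b) \<and>
          (\<exists>ns. strip V E p s2 ns \<and> contains_before ns b a)"
    then obtain y z where yz: "y \<noteq> z" "(p, y) \<in> Ap V E p" "(p, z) \<in> Ap V E p" by blast
    obtain ns1 where n1: "strip V E p s1 ns1" "contains_before ns1 a b" using R by blast
    obtain ns2 where n2: "strip V E p s2 ns2" "contains_before ns2 b a" using R by blast
    have h1: "\<not> esc E {a} s1 \<and> \<not> rav E s1 a b"
      by (rule half_before[OF yz(2) yz(3) yz(1) n1(1) n1(2) ps1 ap bp ab])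
    have h2: "\<not> esc E {b} s2 \<and> \<not> rav E s2 b a"
      by (rule half_before[OF yz(2) yz(3) yz(1) n2(1) n2(2) ps2 bp ap ba])
    have "a \<in> Vp V E p \<and> b \<in> Vp V E p" by (rule cb_mem[OF n1])
    then have "\<not> esc E {a} p" "\<not> esc E {b} p" unfolding Vp_iff by blast+
    then show "DOD E p s1 s2 a b" using DODiff h1 h2 by blast
  qed
qed

end
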